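(* For all integers $n,r,\lambda\ge1$, $l\ge0$, and every $\mathbf{p}=(p_1,p_2,p_3,p_4)$ with $p_i\in(0,1)$, $\sum_ip_i=1$, write $a=\lfloor p_1n\rfloor$, $u=\lfloor p_2n\rfloor$, $c=\lfloor p_3n\rfloor$, $g=n-a-u-c$, and let \[ \bar l_0=\min\big(\min(a,u)+g,\ \min(c,g)+u\big). \] Then $\bar{s}_{\mathbf{p},\lambda}^{[r]}(n,l)= s_\lambda^{[r]}(n,l)$ if $l\le\bar l_0$ and $\bar{s}_{\mathbf{p},\lambda}^{[r]}(n,l)=0$ otherwise; consequently $\bar{s}_{\mathbf{p},\lambda}^{[r]}(n)= \sum_{l=0}^{\bar l_0} s_\lambda^{[r]}(n,l)$.
   Context: A diagram on $n$ vertices is a graph on $\{1,\dots,n\}$ whose edges (arcs) are pairs $(i,j)$, $i<j$, of length $j-i$. For $\lambda\ge1$, an RNA secondary structure of length $n$ with minimum arc-length $\lambda$ is a diagram with every arc of length $\ge\lambda$, no two arcs sharing an endpoint, and no two arcs $(i_1,j_1),(i_2,j_2)$ with $i_1<i_2<j_1<j_2$. A stack of length $t$ is a maximal sequence of arcs $((i,j),(i+1,j-1),\ldots,(i+t-1,j-t+1))$; the structure is $r$-canonical if all stacks have length $\ge r$. $s_{\lambda}^{[r]}(n,l)$ counts such structures of length $n$ with $l$ arcs. Sequences are over $\{\mathbf{A},\mathbf{U},\mathbf{C},\mathbf{G}\}$ with allowed base pairs $\{\mathbf A,\mathbf U\}$, $\{\mathbf C,\mathbf G\}$ (Watson–Crick)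 and $\{\mathbf U,\mathbf G\}$ (wobble), each in either order; a sequence $x_1\cdots x_n$ is compatible with $S$ if $(x_i,x_j)$ is allowed for every arc $(i,j)$. $\bar{s}_{\mathbf{p},\lambda}^{[r]}(n,l)$ (resp. $\bar{s}_{\mathbf{p},\lambda}^{[r]}(n)$) is the number of $r$-canonical secondary structures of length $n$ with minimum arc-length $\lambda$ having $l$ arcs (resp. any number of arcs) that admit a compatible sequence with exactly $a$ letters $\mathbf A$, $u$ letters $\mathbf U$, $c$ letters $\mathbf C$ and $g$ letters $\mathbf G$. *)

theory Defs
  imports Complex_Main
begin

definition is_diagram :: "nat \<Rightarrow> (nat \<times> nat) set \<Rightarrow> bool" where
  "is_diagram n S \<longleftrightarrow> (\<forall>(i,j)\<in>S. 1 \<le> i \<and> i < j \<and> j \<le> n)"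

definition sec_struct :: "nat \<Rightarrow> nat \<Rightarrow> (nat \<times> nat) set \<Rightarrow> bool" where
  "sec_struct n lam S \<longleftrightarrow> is_diagram n S
     \<and> (\<forall>(i,j)\<in>S. j - i \<ge> lam)
     \<and> (\<forall>(i1,j1)\<in>S. \<forall>(i2,j2)\<in>S. (i1,j1) \<noteq> (i2,j2) \<longrightarrow>
           i1 \<noteq> i2 \<and> i1 \<noteq> j2 \<and> j1 \<noteq> i2 \<and> j1 \<noteq> j2)
     \<and> (\<forall>(i1,j1)\<in>S. \<forall>(i2,j2)\<in>S. \<not> (i1 < i2 \<and> i2 < j1 \<and> j1 < j2))"

text \<open>r-canonical: every stack (maximal sequence (i,j),(i+1,j-1),...) has length at least r.
  A stack starts at an arc (i,j) such that (i-1,j+1) is not an arc; its length is at least r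
  iff (i+k,j-k) is an arc for all k < r.\<close>
definition r_canonical :: "nat \<Rightarrow> (nat \<times> nat) set \<Rightarrow> bool" where
  "r_canonical r S \<longleftrightarrow>
     (\<forall>(i,j)\<in>S. (i - 1, j + 1) \<notin> S \<or> i = 0 \<longrightarrow> (\<forall>k<r. (i + k, j - k) \<in> S))"

definition rna_struct :: "nat \<Rightarrow> nat \<Rightarrow> nat \<Rightarrow> (nat \<times> nat) set \<Rightarrow> bool" where
  "rna_struct n lam r S \<longleftrightarrow> sec_struct n lam S \<and> r_canonical r S"

definition s_count :: "nat \<Rightarrow> nat \<Rightarrow> nat \<Rightarrow> nat \<Rightarrow> nat" where
  "s_count lam r n l = card {S. rna_struct n lam r S \<and> card S = l}"

datatype base = A | U | C | G

definition allowed_pair :: "base \<Rightarrow> base \<Rightarrow> bool" where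
  "allowed_pair x y \<longleftrightarrow> {x,y} = {A,U} \<or> {x,y} = {C,G} \<or> {x,y} = {U,G}"

definition compatible :: "(nat \<Rightarrow> base) \<Rightarrow> (nat \<times> nat) set \<Rightarrow> bool" where
  "compatible x S \<longleftrightarrow> (\<forall>(i,j)\<in>S. allowed_pair (x i) (x j))"

definition letter_count :: "nat \<Rightarrow> (nat \<Rightarrow> base) \<Rightarrow> base \<Rightarrow> nat" where
  "letter_count n x b = card {i\<in>{1..n}. x i = b}"

definition cnt_a :: "real \<Rightarrow> nat \<Rightarrow> nat" where "cnt_a p1 n = nat \<lfloor>p1 * real n\<rfloor>"
definition cnt_u :: "real \<Rightarrow> nat \<Rightarrow> nat" where "cnt_u p2 n = nat \<lfloor>p2 * real n\<rfloor>"
definition cnt_c :: "real \<Rightarrow> nat \<Rightarrow> nat" where "cnt_c p3 n = nat \<lfloor>p3 * real n\<rfloor>"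
definition cnt_g :: "real \<Rightarrow> real \<Rightarrow> real \<Rightarrow> nat \<Rightarrow> nat" where
  "cnt_g p1 p2 p3 n = n - cnt_a p1 n - cnt_u p2 n - cnt_c p3 n"

definition admits_seq :: "real \<Rightarrow> real \<Rightarrow> real \<Rightarrow> nat \<Rightarrow> (nat \<times> nat) set \<Rightarrow> bool" where
  "admits_seq p1 p2 p3 n S \<longleftrightarrow> (\<exists>x. compatible x S
      \<and> letter_count n x A = cnt_a p1 n \<and> letter_count n x U = cnt_u p2 n
      \<and> letter_count n x C = cnt_c p3 n \<and> letter_count n x G = cnt_g p1 p2 p3 n)"

text \<open>bar s_{p,lambda}^[r](n,l) and bar s_{p,lambda}^[r](n); p = (p1,p2,p3,p4), and p4 is
  determined by the others since a,u,c,g only depend on p1,p2,p3.\<close>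
definition sbar_count :: "real \<Rightarrow> real \<Rightarrow> real \<Rightarrow> real \<Rightarrow> nat \<Rightarrow> nat \<Rightarrow> nat \<Rightarrow> nat \<Rightarrow> nat" where
  "sbar_count p1 p2 p3 p4 lam r n l =
     card {S. rna_struct n lam r S \<and> card S = l \<and> admits_seq p1 p2 p3 n S}"

definition sbar_total :: "real \<Rightarrow> real \<Rightarrow> real \<Rightarrow> real \<Rightarrow> nat \<Rightarrow> nat \<Rightarrow> nat \<Rightarrow> nat" where
  "sbar_total p1 p2 p3 p4 lam r n =
     card {S. rna_struct n lam r S \<and> admits_seq p1 p2 p3 n S}"

end

theory Submission
  imports Defs
begin

definition matching :: "nat \<Rightarrow> (nat \<times> nat) set \<Rightarrow> bool" where
  "matching n S \<longleftrightarrow> (\<forall>(i,j)\<in>S. 1 \<le> i \<and> i < j \<and> j \<le> n) \<and>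
     (\<forall>(i1,j1)\<in>S. \<forall>(i2,j2)\<in>S. (i1,j1) \<noteq> (i2,j2) \<longrightarrow>
           i1 \<noteq> i2 \<and> i1 \<noteq> j2 \<and> j1 \<noteq> i2 \<and> j1 \<noteq> j2)"

lemma sec_matching: "sec_struct n lam S \<Longrightarrow> matching n S"
  unfolding sec_struct_def matching_def is_diagram_def by blast

lemma matching_finite: "matching n S \<Longrightarrow> finite S"
  by (rule finite_subset[of _ "{1..n}\<times>{1..n}"]) (auto simp: matching_def)

lemma upper:
  assumes m: "matching n S" and cp: "compatible x S"
    and cov: "\<And>p q. allowed_pair p q \<Longrightarrow> p = b1 \<or> p = b2 \<or> q = b1 \<or> q = b2"
    and ne: "b1 \<noteq> b2"
  shows "card S \<le> letter_count n x b1 + letter_count n x b2"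
proof -
  define e where "e s = (if x (fst s) = b1 \<or> x (fst s) = b2 then fst s else snd s)" for s
  have "inj_on e S"
  proof (rule inj_onI)
    fix s t assume s: "s \<in> S" and t: "t \<in> S" and "e s = e t"
    then show "s = t" using m unfolding matching_def e_def
      by (cases s; cases t; auto split: if_splits; fastforce)
  qed
  moreover have "e ` S \<subseteq> {i\<in>{1..n}. x i = b1} \<union> {i\<in>{1..n}. x i = b2}"
  proof
    fix k assume "k \<in> e ` S"
    then obtain i j where ij: "(i,j) \<in> S" "k = e (i,j)" by auto
    have "allowed_pair (x i) (x j)" using cp ij unfolding compatible_def by auto
    from cov[OF this] show "k \<in> {i\<in>{1..n}. x i = b1} \<union> {i\<in>{1..n}. x i = b2}"
      using m ij unfolding matching_def e_def by auto
  qed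
  ultimately have "card S \<le> card ({i\<in>{1..n}. x i = b1} \<union> {i\<in>{1..n}. x i = b2})"
    by (intro card_inj_on_le) auto
  also have "\<dots> = letter_count n x b1 + letter_count n x b2"
    unfolding letter_count_def using ne by (subst card_Un_disjoint) auto
  finally show ?thesis .
qed

lemma matching_dist: "matching n S \<Longrightarrow> s \<in> S \<Longrightarrow> t \<in> S \<Longrightarrow> s \<noteq> t \<Longrightarrow>
   fst s \<noteq> fst t \<and> fst s \<noteq> snd t \<and> snd s \<noteq> fst t \<and> snd s \<noteq> snd t"
  unfolding matching_def by (cases s; cases t) fastforce

lemma matching_lt: "matching n S \<Longrightarrow> s \<in> S \<Longrightarrow> 1 \<le> fst s \<and> fst s < snd s \<and> snd s \<le> n"
  unfolding matching_def by (cases s) fastforce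

lemma construct:
  assumes m: "matching n S" and cS: "card S = x + y + z"
    and hx: "x \<le> a" "x + z \<le> u" "y \<le> c" "y + z \<le> g" and hn: "a + u + c + g = n"
  shows "\<exists>lab. compatible lab S \<and> letter_count n lab A = a \<and> letter_count n lab U = u
     \<and> letter_count n lab C = c \<and> letter_count n lab G = g"
proof -
  define l where "l = x + y + z"
  have fin: "finite S" using m by (rule matching_finite)
  obtain f where f: "bij_betw f {0..<l} S" using ex_bij_betw_nat_finite[OF fin] cS l_def by auto
  have injfst: "inj_on fst S" 
    by (rule inj_onI) (use matching_dist[OF m] in metis)
  have injsnd: "inj_on snd S"
    by (rule inj_onI) (use matching_dist[OF m] in metis)
  have disj: "fst ` S \<inter> snd ` S = {}"
  proof (rule ccontr)
    assume "fst ` S \<inter> snd ` S \<noteq> {}"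
    then obtain s t where st: "s \<in> S" "t \<in> S" "fst s = snd t" by auto
    show False
    proof (cases "s = t")
      case True then show False using st matching_lt[OF m, of s] by simp
    next
      case False then show False using st matching_dist[OF m st(1) st(2) False] by simp
    qed
  qed
  have sub: "fst ` S \<union> snd ` S \<subseteq> {1..n}" using matching_lt[OF m] by fastforce
  have cE: "card (fst ` S \<union> snd ` S) = 2 * l"
    using disj fin card_image[OF injfst] card_image[OF injsnd] cS l_def
    by (subst card_Un_disjoint) auto
  define P where "P = {1..n} - (fst ` S \<union> snd ` S)"
  have cP: "card P = n - 2 * l" unfolding P_def
    using card_Diff_subset[OF finite_subset[OF sub finite_atLeastAtMost] sub] cE by simp
  have l2n: "2 * l \<le> n" using card_mono[OF _ sub] cE by simp
  obtain h where h: "bij_betw h {0..<n - 2*l} P"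
    using ex_bij_betw_nat_finite[of P] cP unfolding P_def by auto
  define \<psi> where "\<psi> k = (if k < l then fst (f k) else if k < 2*l then snd (f (k-l)) else h (k - 2*l))" for k
  have fS: "k < l \<Longrightarrow> f k \<in> S" for k using f by (auto simp: bij_betw_def)
  have hP: "k < n - 2*l \<Longrightarrow> h k \<in> P" for k using h by (auto simp: bij_betw_def)
  have finj: "\<lbrakk>k1 < l; k2 < l; f k1 = f k2\<rbrakk> \<Longrightarrow> k1 = k2" for k1 k2
    using f by (auto simp: bij_betw_def inj_on_def)
  have hinj: "\<lbrakk>k1 < n - 2*l; k2 < n - 2*l; h k1 = h k2\<rbrakk> \<Longrightarrow> k1 = k2" for k1 k2
    using h by (auto simp: bij_betw_def inj_on_def)
  have img: "\<psi> ` {0..<n} \<subseteq> {1..n}"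
  proof
    fix i assume "i \<in> \<psi> ` {0..<n}"
    then obtain k where k: "k < n" "i = \<psi> k" by auto
    show "i \<in> {1..n}"
    proof (cases "k < l")
      case True then show ?thesis using fS[OF True] sub k \<psi>_def by auto
    next
      case False
      show ?thesis
      proof (cases "k < 2*l")
        case True then have "f (k - l) \<in> S" using False by (intro fS) auto
        then show ?thesis using sub k \<psi>_def True False by auto
      next
        case F2: False
        then have "h (k - 2*l) \<in> P" using k by (intro hP) auto
        then show ?thesis using k \<psi>_def F2 False P_def by auto
      qed
    qed
  qed
  have inj: "inj_on \<psi> {0..<n}"
  proof (rule inj_onI)
    fix k1 k2 assume k1: "k1 \<in> {0..<n}" and k2: "k2 \<in> {0..<n}" and eq: "\<psi> k1 = \<psi> k2"
    consider "k1 < l" | "l \<le> k1" "k1 < 2*l" | "2*l \<le> k1" by linarith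
    then show "k1 = k2"
    proof cases
      case 1
      have s1: "f k1 \<in> S" using 1 fS by auto
      consider "k2 < l" | "l \<le> k2" "k2 < 2*l" | "2*l \<le> k2" by linarith
      then show ?thesis
      proof cases
        case a: 1
        have "fst (f k1) = fst (f k2)" using eq 1 a \<psi>_def by auto
        then have "f k1 = f k2" using injfst fS 1 a by (auto simp: inj_on_def)
        then show ?thesis using finj 1 a by auto
      next
        case a: 2
        have "f (k2 - l) \<in> S" using a fS by auto
        moreover have "fst (f k1) = snd (f (k2 - l))" using eq 1 a \<psi>_def by auto
        ultimately show ?thesis using disj s1 by (metis disjoint_iff image_eqI)
      next
        case a: 3
        have "h (k2 - 2*l) \<in> P" using a k2 hP by auto
        moreover have "fst (f k1) = h (k2 - 2*l)" using eq 1 a \<psi>_def by auto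
        ultimately show ?thesis using s1 P_def by (metis DiffD2 UnCI image_eqI)
      qed
    next
      case 2
      have s1: "f (k1 - l) \<in> S" using 2 fS by auto
      consider "k2 < l" | "l \<le> k2" "k2 < 2*l" | "2*l \<le> k2" by linarith
      then show ?thesis
      proof cases
        case a: 1
        have "f k2 \<in> S" using a fS by auto
        moreover have "snd (f (k1 - l)) = fst (f k2)" using eq 2 a \<psi>_def by auto
        ultimately show ?thesis using disj s1 by (metis disjoint_iff image_eqI)
      next
        case a: 2
        have "snd (f (k1 - l)) = snd (f (k2 - l))" using eq 2 a \<psi>_def by auto
        then have "f (k1 - l) = f (k2 - l)" using injsnd fS 2 a by (auto simp: inj_on_def)
        then have "k1 - l = k2 - l" using finj 2 a by auto
        then show ?thesis using 2 a by auto
      next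
        case a: 3
        have "h (k2 - 2*l) \<in> P" using a k2 hP by auto
        moreover have "snd (f (k1 - l)) = h (k2 - 2*l)" using eq 2 a \<psi>_def by auto
        ultimately show ?thesis using s1 P_def by (metis DiffD2 UnCI image_eqI)
      qed
    next
      case 3
      have s1: "h (k1 - 2*l) \<in> P" using 3 k1 hP by auto
      consider "k2 < l" | "l \<le> k2" "k2 < 2*l" | "2*l \<le> k2" by linarith
      then show ?thesis
      proof cases
        case a: 1
        have "f k2 \<in> S" using a fS by auto
        moreover have "h (k1 - 2*l) = fst (f k2)" using eq 3 a \<psi>_def by auto
        ultimately show ?thesis using s1 P_def by (metis DiffD2 UnCI image_eqI)
      next
        case a: 2
        have "f (k2 - l) \<in> S" using a fS by auto
        moreover have "h (k1 - 2*l) = snd (f (k2 - l))" using eq 3 a \<psi>_def by auto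
        ultimately show ?thesis using s1 P_def by (metis DiffD2 UnCI image_eqI)
      next
        case a: 3
        have "h (k1 - 2*l) = h (k2 - 2*l)" using eq 3 a \<psi>_def by auto
        then have "k1 - 2*l = k2 - 2*l" using hinj 3 a k1 k2 by auto
        then show ?thesis using 3 a by auto
      qed
    qed
  qed
  have bij: "bij_betw \<psi> {0..<n} {1..n}"
    unfolding bij_betw_def using inj card_subset_eq[OF _ img] card_image[OF inj] by simp
  define L where "L k = (if k < x then A else if k < x+y then C else if k < l then U
     else if k < l + x then U else if k < 2*l then G
     else if k < 2*l + (a-x) then A else if k < 2*l+(a-x)+(u-x-z) then U
     else if k < 2*l + (a-x)+(u-x-z)+(c-y) then C else G)" for k
  define lab where "lab i = L (the_inv_into {0..<n} \<psi> i)" for i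
  have labpsi: "k < n \<Longrightarrow> lab (\<psi> k) = L k" for k
    unfolding lab_def using the_inv_into_f_f[OF inj] by auto
  have comp: "compatible lab S"
    unfolding compatible_def
  proof (intro ballI, clarify)
    fix i j assume ij: "(i,j) \<in> S"
    then obtain k where k: "k < l" "f k = (i,j)" using f by (auto simp: bij_betw_def)
    have "\<psi> k = i" "\<psi> (k + l) = j" using k \<psi>_def by auto
    moreover have "k < n" "k + l < n" using k l2n by auto
    ultimately have "lab i = L k" "lab j = L (k + l)" using labpsi by metis+
    have ap: "allowed_pair A U" "allowed_pair C G" "allowed_pair U G"
      by (simp_all add: allowed_pair_def)
    have "allowed_pair (L k) (L (k + l))"
    proof (cases "k < x")
      case True then show ?thesis using ap k unfolding L_def l_def by simp
    next
      case F: False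
      show ?thesis
      proof (cases "k < x + y")
        case True then show ?thesis using ap F k unfolding L_def l_def by simp
      next
        case False then show ?thesis using ap F k unfolding L_def l_def by simp
      qed
    qed
    then show "allowed_pair (lab i) (lab j)" using \<open>lab i = L k\<close> \<open>lab j = L (k + l)\<close> by simp
  qed
  have cnt: "letter_count n lab b = card {k\<in>{0..<n}. L k = b}" for b
  proof -
    have "{i\<in>{1..n}. lab i = b} = \<psi> ` {k\<in>{0..<n}. L k = b}"
    proof
      show "\<psi> ` {k\<in>{0..<n}. L k = b} \<subseteq> {i\<in>{1..n}. lab i = b}"
        using img labpsi by (auto simp: image_subset_iff)
      show "{i\<in>{1..n}. lab i = b} \<subseteq> \<psi> ` {k\<in>{0..<n}. L k = b}"
      proof
        fix i assume i: "i \<in> {i\<in>{1..n}. lab i = b}"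
        then obtain k where k: "k \<in> {0..<n}" "i = \<psi> k" using bij unfolding bij_betw_def by blast
        then show "i \<in> \<psi> ` {k\<in>{0..<n}. L k = b}" using i labpsi by auto
      qed
    qed
    note E = this
    have I: "inj_on \<psi> {k\<in>{0..<n}. L k = b}" by (rule inj_on_subset[OF inj]) auto
    show ?thesis unfolding letter_count_def E using card_image[OF I] .
  qed
  have nn: "n = 2*l + (a-x) + (u-x-z) + (c-y) + (g-y-z)" using hx hn l_def by auto
  have eA: "{k\<in>{0..<n}. L k = A} = {0..<x} \<union> {2*l..<2*l+(a-x)}"
    by (rule set_eqI) (simp add: L_def l_def nn split: if_split; linarith)
  have eU: "{k\<in>{0..<n}. L k = U} = {x+y..<l} \<union> ({l..<l+x} \<union> {2*l+(a-x)..<2*l+(a-x)+(u-x-z)})"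
    by (rule set_eqI) (simp add: L_def l_def nn split: if_split; linarith)
  have eC: "{k\<in>{0..<n}. L k = C} = {x..<x+y} \<union> {2*l+(a-x)+(u-x-z)..<2*l+(a-x)+(u-x-z)+(c-y)}"
    by (rule set_eqI) (simp add: L_def l_def nn split: if_split; linarith)
  have eG: "{k\<in>{0..<n}. L k = G} = {l+x..<2*l} \<union> {2*l+(a-x)+(u-x-z)+(c-y)..<n}"
    by (rule set_eqI) (simp add: L_def l_def nn split: if_split; linarith)
  have "card {k\<in>{0..<n}. L k = A} = a" unfolding eA using hx l_def by (subst card_Un_disjoint) auto
  moreover have "card {k\<in>{0..<n}. L k = U} = u"
  proof -
    have "card ({l..<l+x} \<union> {2*l+(a-x)..<2*l+(a-x)+(u-x-z)}) = x + (u-x-z)"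
      using hx l_def by (subst card_Un_disjoint) auto
    then show ?thesis unfolding eU using hx l_def by (subst card_Un_disjoint) auto
  qed
  moreover have "card {k\<in>{0..<n}. L k = C} = c" unfolding eC using hx l_def by (subst card_Un_disjoint) auto
  moreover have "card {k\<in>{0..<n}. L k = G} = g" unfolding eG using hx nn l_def by (subst card_Un_disjoint) auto
  ultimately show ?thesis using comp cnt by metis
qed

lemma cov1: "allowed_pair p q \<Longrightarrow> p = A \<or> p = G \<or> q = A \<or> q = G"
  by (cases p; cases q) (auto simp: allowed_pair_def doubleton_eq_iff)
lemma cov2: "allowed_pair p q \<Longrightarrow> p = U \<or> p = C \<or> q = U \<or> q = C"
  by (cases p; cases q) (auto simp: allowed_pair_def doubleton_eq_iff)
lemma cov3: "allowed_pair p q \<Longrightarrow> p = U \<or> p = G \<or> q = U \<or> q = G"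
  by (cases p; cases q) (auto simp: allowed_pair_def doubleton_eq_iff)

lemma xyz_exists:
  fixes l a u c g :: nat
  assumes "l \<le> a + g" "l \<le> u + c" "l \<le> u + g"
  shows "\<exists>x y z. l = x + y + z \<and> x \<le> a \<and> x + z \<le> u \<and> y \<le> c \<and> y + z \<le> g"
proof -
  define x where "x = min (min a u) l"
  define y where "y = min (min c g) (l - x)"
  define z where "z = l - x - y"
  have "l = x + y + z \<and> x \<le> a \<and> x + z \<le> u \<and> y \<le> c \<and> y + z \<le> g"
    using assms unfolding x_def y_def z_def min_def by (simp split: if_split; linarith)
  then show ?thesis by blast
qed

lemma admits_iff:
  assumes m: "matching n S" and hn: "cnt_a p1 n + cnt_u p2 n + cnt_c p3 n + cnt_g p1 p2 p3 n = n"
  shows "admits_seq p1 p2 p3 n S \<longleftrightarrow>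
    card S \<le> min (min (cnt_a p1 n) (cnt_u p2 n) + cnt_g p1 p2 p3 n) (min (cnt_c p3 n) (cnt_g p1 p2 p3 n) + cnt_u p2 n)"
    (is "?L \<longleftrightarrow> card S \<le> min (min ?a ?u + ?g) (min ?c ?g + ?u)")
proof
  assume ?L
  then obtain x where x: "compatible x S" "letter_count n x A = ?a" "letter_count n x U = ?u"
      "letter_count n x C = ?c" "letter_count n x G = ?g" unfolding admits_seq_def by blast
  have "card S \<le> ?a + ?g" using upper[OF m x(1) cov1] x by simp
  moreover have "card S \<le> ?u + ?c" using upper[OF m x(1) cov2] x by simp
  moreover have "card S \<le> ?u + ?g" using upper[OF m x(1) cov3] x by simp
  ultimately show "card S \<le> min (min ?a ?u + ?g) (min ?c ?g + ?u)" by (simp add: min_def)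
next
  assume "card S \<le> min (min ?a ?u + ?g) (min ?c ?g + ?u)"
  then have "card S \<le> ?a + ?g" "card S \<le> ?u + ?c" "card S \<le> ?u + ?g" by auto
  from xyz_exists[OF this] obtain x y z where
    h: "card S = x + y + z" "x \<le> ?a" "x + z \<le> ?u" "y \<le> ?c" "y + z \<le> ?g" by blast
  from construct[OF m h hn] show ?L unfolding admits_seq_def by blast
qed

lemma floor_bound: "0 \<le> p \<Longrightarrow> real (nat \<lfloor>p * real n\<rfloor>) \<le> p * real n"
  by (simp add: of_int_floor_le)

lemma rna_finite: "finite {S. rna_struct n lam r S \<and> P S}"
proof (rule finite_subset[of _ "Pow ({1..n}\<times>{1..n})"])
  show "{S. rna_struct n lam r S \<and> P S} \<subseteq> Pow ({1..n}\<times>{1..n})"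
  proof
    fix S assume "S \<in> {S. rna_struct n lam r S \<and> P S}"
    then have m: "matching n S" unfolding rna_struct_def using sec_matching by blast
    have "S \<subseteq> {1..n}\<times>{1..n}"
    proof
      fix s assume "s \<in> S"
      from matching_lt[OF m this] show "s \<in> {1..n}\<times>{1..n}" by (cases s) auto
    qed
    then show "S \<in> Pow ({1..n}\<times>{1..n})" by simp
  qed
qed simp

theorem mainTheorem7:
  fixes n r lam l :: nat and p1 p2 p3 p4 :: real
  assumes "n \<ge> 1" "r \<ge> 1" "lam \<ge> 1"
    and "0 < p1" "p1 < 1" "0 < p2" "p2 < 1" "0 < p3" "p3 < 1" "0 < p4" "p4 < 1"
    and "p1 + p2 + p3 + p4 = 1"
  defines "a \<equiv> cnt_a p1 n" and "u \<equiv> cnt_u p2 n" and "c \<equiv> cnt_c p3 n"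
    and "g \<equiv> cnt_g p1 p2 p3 n"
  defines "l0 \<equiv> min (min a u + g) (min c g + u)"
  shows "sbar_count p1 p2 p3 p4 lam r n l = (if l \<le> l0 then s_count lam r n l else 0)
    \<and> sbar_total p1 p2 p3 p4 lam r n = (\<Sum>k=0..l0. s_count lam r n k)"
proof -
  have "real a \<le> p1 * real n" "real u \<le> p2 * real n" "real c \<le> p3 * real n"
    unfolding a_def u_def c_def cnt_a_def cnt_u_def cnt_c_def
    using floor_bound assms(4,6,8) by auto
  moreover have "(p1 + p2 + p3) * real n \<le> real n"
  proof -
    have "p1 + p2 + p3 \<le> 1" using assms(10,12) by linarith
    from mult_right_mono[OF this, of "real n"] show ?thesis by simp
  qed
  ultimately have "real (a + u + c) \<le> real n" by (simp add: algebra_simps)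
  then have "a + u + c \<le> n" by linarith
  then have hn: "a + u + c + g = n" unfolding g_def cnt_g_def a_def u_def c_def by simp
  have key: "rna_struct n lam r S \<Longrightarrow> admits_seq p1 p2 p3 n S \<longleftrightarrow> card S \<le> l0" for S
    unfolding l0_def a_def u_def c_def g_def
    using admits_iff[OF _ hn[unfolded a_def u_def c_def g_def]] sec_matching
    unfolding rna_struct_def by blast
  have p1: "sbar_count p1 p2 p3 p4 lam r n l = (if l \<le> l0 then s_count lam r n l else 0)"
  proof (cases "l \<le> l0")
    case True
    then have "{S. rna_struct n lam r S \<and> card S = l \<and> admits_seq p1 p2 p3 n S}
       = {S. rna_struct n lam r S \<and> card S = l}" using key by auto
    then show ?thesis using True unfolding sbar_count_def s_count_def by simp
  next
    case False
    have E: "{S. rna_struct n lam r S \<and> card S = l \<and> admits_seq p1 p2 p3 n S} = {}"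
      using key False by auto
    show ?thesis using False unfolding sbar_count_def E by simp
  qed
  have "{S. rna_struct n lam r S \<and> admits_seq p1 p2 p3 n S}
      = (\<Union>k\<in>{0..l0}. {S. rna_struct n lam r S \<and> card S = k})" using key by auto
  then have "sbar_total p1 p2 p3 p4 lam r n
      = card (\<Union>k\<in>{0..l0}. {S. rna_struct n lam r S \<and> card S = k})"
    unfolding sbar_total_def by simp
  also have "\<dots> = (\<Sum>k=0..l0. card {S. rna_struct n lam r S \<and> card S = k})"
    by (rule card_UN_disjoint) (auto intro: rna_finite)
  finally show ?thesis using p1 unfolding s_count_def by simp
qed

end
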